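(* Let $k$ be a positive integer. (a) For the Petersen graph $\mathcal{P}$, $\dim_{k,f}(\mathcal{P})=\frac{5}{3}$. (b) For $n \ge 3$, $\dim_{k,f}(C_n+K_1)=2$ if $n \in \{3,4\}$, $\dim_{k,f}(C_n+K_1)=\frac{3}{2}$ if $n=5$, and $\dim_{k,f}(C_n+K_1)=\frac{n}{4}$ if $n\ge 6$. (c) For $m \ge 2$, let $G=K_{a_1, a_2, \ldots, a_m}$ be a complete $m$-partite graph of order $n=\sum_{i=1}^{m}a_i$, and let $s$ be the number of partite sets of $G$ consisting of exactly one element. Then $\dim_{k,f}(G)=\frac{n-1}{2}$ if $s=1$, and $\dim_{k,f}(G)=\frac{n}{2}$ otherwise.
   Context: $C_n$ is the cycle on $n$ vertices, $K_1$ a single vertex, and $G+H$ denotes the join (disjoint union plus all edges between the two graphs). $d(x,y)$ is the distance in $G$. For a positive integer $k$, $d_k(x,y)=\min\{d(x,y),k+1\}$ and $R_k\{x,y\}=\{z\in V(G): d_k(x,z)\neq d_k(y,z)\}$. For a function $g$ on $V(G)$ and $U\subseteq V(G)$, $g(U)=\sum_{s\in U}g(s)$. A function $h:V(G)\to[0,1]$ is a $k$-truncated resolving function of $G$ if $h(R_k\{x,y\})\ge 1$ for all distinct $x,y\in V(G)$; $\dim_{k,f}(G)$ is the minimum of $h(V(G))$ over all such $h$. *)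

theory Defs
  imports "HOL-Analysis.Analysis"
begin

text \<open>A graph is given by a vertex set V and a symmetric irreflexive adjacency
relation E (only its restriction to V matters).\<close>

fun walkn :: "'a set \<Rightarrow> ('a \<Rightarrow> 'a \<Rightarrow> bool) \<Rightarrow> nat \<Rightarrow> 'a \<Rightarrow> 'a \<Rightarrow> bool" where
  "walkn V E 0 x y = (x = y \<and> x \<in> V)"
| "walkn V E (Suc n) x y = (x \<in> V \<and> (\<exists>z\<in>V. E x z \<and> walkn V E n z y))"

definition gdist :: "'a set \<Rightarrow> ('a \<Rightarrow> 'a \<Rightarrow> bool) \<Rightarrow> 'a \<Rightarrow> 'a \<Rightarrow> enat" where
  "gdist V E x y = (if \<exists>n. walkn V E n x y then enat (LEAST n. walkn V E n x y) else \<infinity>)"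

definition tdist :: "nat \<Rightarrow> 'a set \<Rightarrow> ('a \<Rightarrow> 'a \<Rightarrow> bool) \<Rightarrow> 'a \<Rightarrow> 'a \<Rightarrow> enat" where
  "tdist k V E x y = min (gdist V E x y) (enat (k + 1))"

definition Rk :: "nat \<Rightarrow> 'a set \<Rightarrow> ('a \<Rightarrow> 'a \<Rightarrow> bool) \<Rightarrow> 'a \<Rightarrow> 'a \<Rightarrow> 'a set" where
  "Rk k V E x y = {z \<in> V. tdist k V E x z \<noteq> tdist k V E y z}"

definition trunc_resolving_fn :: "nat \<Rightarrow> 'a set \<Rightarrow> ('a \<Rightarrow> 'a \<Rightarrow> bool) \<Rightarrow> ('a \<Rightarrow> real) \<Rightarrow> bool" where
  "trunc_resolving_fn k V E h \<longleftrightarrow>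
     (\<forall>v\<in>V. 0 \<le> h v \<and> h v \<le> 1) \<and>
     (\<forall>x\<in>V. \<forall>y\<in>V. x \<noteq> y \<longrightarrow> sum h (Rk k V E x y) \<ge> 1)"

definition frac_tdim :: "nat \<Rightarrow> 'a set \<Rightarrow> ('a \<Rightarrow> 'a \<Rightarrow> bool) \<Rightarrow> real" where
  "frac_tdim k V E = Inf {sum h V | h. trunc_resolving_fn k V E h}"

text \<open>Petersen graph as the Kneser graph K(5,2).\<close>
definition petersen_V :: "nat set set" where
  "petersen_V = {S. S \<subseteq> {0..<5} \<and> card S = 2}"
definition petersen_E :: "nat set \<Rightarrow> nat set \<Rightarrow> bool" where
  "petersen_E S T \<longleftrightarrow> S \<in> petersen_V \<and> T \<in> petersen_V \<and> S \<inter> T = {}"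

text \<open>Wheel C_n + K_1: cycle on 0..n-1, hub vertex n.\<close>
definition wheel_V :: "nat \<Rightarrow> nat set" where
  "wheel_V n = {0..n}"
definition wheel_E :: "nat \<Rightarrow> nat \<Rightarrow> nat \<Rightarrow> bool" where
  "wheel_E n i j \<longleftrightarrow>
     (i < n \<and> j < n \<and> (j = (i + 1) mod n \<or> i = (j + 1) mod n) \<and> i \<noteq> j)
   \<or> (i = n \<and> j < n) \<or> (j = n \<and> i < n)"

text \<open>Complete m-partite graph K_{a_0,...,a_{m-1}}: vertex (i,j) is the j-th vertex of part i.\<close>
definition cmp_V :: "nat \<Rightarrow> (nat \<Rightarrow> nat) \<Rightarrow> (nat \<times> nat) set" where
  "cmp_V m a = {(i, j). i < m \<and> j < a i}"
definition cmp_E :: "nat \<Rightarrow> (nat \<Rightarrow> nat) \<Rightarrow> nat \<times> nat \<Rightarrow> nat \<times> nat \<Rightarrow> bool" where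
  "cmp_E m a u v \<longleftrightarrow> u \<in> cmp_V m a \<and> v \<in> cmp_V m a \<and> fst u \<noteq> fst v"

end

theory Submission
  imports Defs
begin


definition dd :: "('a \<Rightarrow> 'a \<Rightarrow> bool) \<Rightarrow> 'a \<Rightarrow> 'a \<Rightarrow> nat" where
  "dd E x y = (if x = y then 0 else if E x y then 1 else 2)"

definition diam2 :: "'a set \<Rightarrow> ('a \<Rightarrow> 'a \<Rightarrow> bool) \<Rightarrow> bool" where
  "diam2 V E \<longleftrightarrow> (\<forall>x\<in>V. \<forall>y\<in>V. x \<noteq> y \<longrightarrow> \<not> E x y \<longrightarrow> (\<exists>z\<in>V. E x z \<and> E z y))"

lemma gdist_dd:
  assumes d: "diam2 V E" and x: "x \<in> V" and y: "y \<in> V"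
  shows "gdist V E x y = enat (dd E x y)"
proof -
  have w1: "walkn V E (Suc 0) x y \<longleftrightarrow> E x y" using x y by auto
  have w2: "walkn V E (Suc (Suc 0)) x y \<longleftrightarrow> (\<exists>z\<in>V. E x z \<and> E z y)" using x y by auto
  show ?thesis
  proof (cases "x = y")
    case True
    have "walkn V E 0 x y" using True x by simp
    moreover have "(LEAST n. walkn V E n x y) = 0" using \<open>walkn V E 0 x y\<close> by (intro Least_equality) auto
    ultimately show ?thesis unfolding gdist_def dd_def using True by (metis zero_enat_def)
  next
    case F: False
    show ?thesis
    proof (cases "E x y")
      case True
      have "(LEAST n. walkn V E n x y) = 1"
      proof (rule Least_equality)
        show "walkn V E 1 x y" using w1 True by simp
        fix m assume "walkn V E m x y" then show "1 \<le> m" using F by (cases m) auto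
      qed
      moreover have "\<exists>n. walkn V E n x y" using w1 True by (metis One_nat_def)
      ultimately show ?thesis unfolding gdist_def dd_def using True F by (simp add: one_enat_def)
    next
      case False
      have ex: "\<exists>z\<in>V. E x z \<and> E z y" using d x y F False unfolding diam2_def by blast
      have "(LEAST n. walkn V E n x y) = 2"
      proof (rule Least_equality)
        show "walkn V E 2 x y" using w2 ex by (simp add: numeral_2_eq_2)
        fix m assume wm: "walkn V E m x y"
        show "2 \<le> m"
        proof (rule ccontr)
          assume "\<not> 2 \<le> m"
          then have "m = 0 \<or> m = Suc 0" by linarith
          then show False using wm F False w1 by auto
        qed
      qed
      moreover have "\<exists>n. walkn V E n x y" using w2 ex by blast
      ultimately show ?thesis unfolding gdist_def dd_def using False F by simp
    qed
  qed
qed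

lemma tdist_dd:
  assumes "k \<ge> 1" "diam2 V E" "x \<in> V" "y \<in> V"
  shows "tdist k V E x y = enat (dd E x y)"
  using assms gdist_dd[of V E x y] unfolding tdist_def dd_def by auto

lemma Rk_dd:
  assumes "k \<ge> 1" "diam2 V E" "x \<in> V" "y \<in> V"
  shows "Rk k V E x y = {z\<in>V. dd E x z \<noteq> dd E y z}"
  using assms tdist_dd[of k V E] unfolding Rk_def by auto

lemma frac_tdim_eqI:
  assumes "trunc_resolving_fn k V E h0" "sum h0 V = v"
    and "\<And>h. trunc_resolving_fn k V E h \<Longrightarrow> v \<le> sum h V"
  shows "frac_tdim k V E = v"
  unfolding frac_tdim_def
  by (rule cInf_eq_minimum) (use assms in auto)

lemma pair_bound:
  fixes f :: "'a \<Rightarrow> real"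
  assumes fin: "finite A" and c1: "card A \<noteq> 1"
    and pr: "\<And>x y. x \<in> A \<Longrightarrow> y \<in> A \<Longrightarrow> x \<noteq> y \<Longrightarrow> 1 \<le> f x + f y"
  shows "real (card A) / 2 \<le> sum f A"
proof (cases "A = {}")
  case True then show ?thesis by simp
next
  case ne: False
  then have c2: "card A \<ge> 2" using c1 fin by (metis One_nat_def card_0_eq less_2_cases not_le)
  show ?thesis
  proof (cases "\<forall>x\<in>A. 1/2 \<le> f x")
    case True
    then have "sum (\<lambda>_. 1/2) A \<le> sum f A" by (intro sum_mono) auto
    then show ?thesis by simp
  next
    case False
    then obtain x0 where x0: "x0 \<in> A" "f x0 < 1/2" by auto
    define t where "t = f x0"
    have "sum (\<lambda>_. 1 - t) (A - {x0}) \<le> sum f (A - {x0})"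
      using pr x0 unfolding t_def by (intro sum_mono) (smt (verit) DiffD1 DiffD2 insertI1)
    moreover have "sum f A = f x0 + sum f (A - {x0})" using fin x0 by (simp add: sum.remove)
    moreover have "card (A - {x0}) = card A - 1" using fin x0 by simp
    ultimately have "sum f A \<ge> t + (real (card A) - 1) * (1 - t)"
      using c2 unfolding t_def by (simp add: of_nat_diff)
    moreover have "(real (card A) - 2) * (1/2 - t) \<ge> 0"
      using c2 x0 unfolding t_def by (intro mult_nonneg_nonneg) auto
    ultimately show ?thesis by (simp add: algebra_simps)
  qed
qed

lemma pair_from_R:
  fixes h :: "'a \<Rightarrow> real"
  assumes "trunc_resolving_fn k V E h" "u \<in> V" "v \<in> V" "u \<noteq> v" "Rk k V E u v \<subseteq> {u, v}"
  shows "1 \<le> h u + h v"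
proof -
  have "1 \<le> sum h (Rk k V E u v)" using assms unfolding trunc_resolving_fn_def by blast
  also have "\<dots> \<le> sum h {u, v}"
    using assms unfolding trunc_resolving_fn_def by (intro sum_mono2) auto
  finally show ?thesis using assms by simp
qed

lemma sum_ge_sub:
  fixes h :: "'a \<Rightarrow> real"
  assumes "finite R" "S \<subseteq> R" "\<forall>z\<in>R. 0 \<le> h z"
  shows "sum h S \<le> sum h R"
  using assms by (intro sum_mono2) auto

lemma R_contains:
  assumes "u \<in> V" "v \<in> V" "u \<noteq> v" "k \<ge> 1" "diam2 V E"
  shows "u \<in> Rk k V E u v" "v \<in> Rk k V E u v"
  using assms by (auto simp: Rk_dd dd_def)



lemma filter_insert_T: "P a \<Longrightarrow> {z \<in> insert a A. P z} = insert a {z\<in>A. P z}"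
  by auto
lemma filter_insert_F: "\<not> P a \<Longrightarrow> {z \<in> insert a A. P z} = {z\<in>A. P z}"
  by auto
lemma filter_insert: "{z \<in> insert a A. P z} = (if P a then insert a {z\<in>A. P z} else {z\<in>A. P z})"
  by auto

lemma pV: "petersen_V = {{0,1},{0,2},{0,3},{0,4},{1,2},{1,3},{1,4},{2,3},{2,4},{3,4}}"
proof
  show "petersen_V \<subseteq> {{0,1},{0,2},{0,3},{0,4},{1,2},{1,3},{1,4},{2,3},{2,4},{3,4}}"
  proof
    fix S assume "S \<in> petersen_V"
    then obtain a b where "S = {a,b}" "a \<noteq> b" "a < 5" "b < 5"
      unfolding petersen_V_def by (auto simp: card_2_iff)
    moreover have "a \<in> {0,1,2,3,4}" "b \<in> {0,1,2,3,4}" using \<open>a < 5\<close> \<open>b < 5\<close> by auto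
    ultimately show "S \<in> {{0,1},{0,2},{0,3},{0,4},{1,2},{1,3},{1,4},{2,3},{2,4},{3,4}}"
      by (simp add: doubleton_eq_iff) (elim disjE; simp)
  qed
next
  show "{{0,1},{0,2},{0,3},{0,4},{1,2},{1,3},{1,4},{2,3},{2,4},{3,4}} \<subseteq> petersen_V"
    unfolding petersen_V_def by auto
qed

lemma pE: "petersen_E S T \<longleftrightarrow> S \<in> petersen_V \<and> T \<in> petersen_V \<and> S \<inter> T = {}"
  by (simp add: petersen_E_def)

lemma pE2: "S \<in> petersen_V \<Longrightarrow> T \<in> petersen_V \<Longrightarrow> petersen_E S T \<longleftrightarrow> S \<inter> T = {}"
  by (simp add: petersen_E_def)

lemma p_diam2: "diam2 petersen_V petersen_E"
  unfolding diam2_def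
  apply (simp only: pE2 cong: ball_cong bex_cong)
  unfolding pV
  apply (simp add: doubleton_eq_iff)
  done

definition pD :: "nat set \<Rightarrow> nat set \<Rightarrow> bool" where "pD S T \<longleftrightarrow> S \<inter> T = {}"

lemma pR: "x \<in> petersen_V \<Longrightarrow> y \<in> petersen_V \<Longrightarrow>
  {z\<in>petersen_V. dd petersen_E x z \<noteq> dd petersen_E y z} = {z\<in>petersen_V. dd pD x z \<noteq> dd pD y z}"
  by (auto simp: dd_def pE2 pD_def)

definition pl :: "nat set list" where "pl = [{0,1},{0,2},{0,3},{0,4},{1,2},{1,3},{1,4},{2,3},{2,4},{3,4}]"

lemma pc6: "\<forall>x\<in>set pl. \<forall>y\<in>set pl. x \<noteq> y \<longrightarrow> 6 \<le> card (Set.filter (\<lambda>z. dd pD x z \<noteq> dd pD y z) (set pl))"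
  by code_simp

lemma pV_pl: "petersen_V = set pl" unfolding pV pl_def by simp

lemma pRk: assumes "k \<ge> 1" "x \<in> petersen_V" "y \<in> petersen_V"
  shows "Rk k petersen_V petersen_E x y = Set.filter (\<lambda>z. dd pD x z \<noteq> dd pD y z) (set pl)"
  using Rk_dd[OF assms(1) p_diam2 assms(2,3)] pR[OF assms(2,3)] pV_pl by (auto simp: Set.filter_eq)

lemma card_pl: "card (set pl) = 10" by code_simp

lemma pR0: "Set.filter (\<lambda>z. dd pD {0,1} z \<noteq> dd pD {0,2} z) (set pl) = {{0,1},{0,2},{1,3},{1,4},{2,3},{2,4}}" by code_simp
lemma pR1: "Set.filter (\<lambda>z. dd pD {0,3} z \<noteq> dd pD {1,2} z) (set pl) = {{0,3},{0,4},{1,2},{1,4},{2,4},{3,4}}" by code_simp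
lemma pR2: "Set.filter (\<lambda>z. dd pD {0,4} z \<noteq> dd pD {1,2} z) (set pl) = {{0,3},{0,4},{1,2},{1,3},{2,3},{3,4}}" by code_simp
lemma pR3: "Set.filter (\<lambda>z. dd pD {1,2} z \<noteq> dd pD {3,4} z) (set pl) = {{0,1},{0,2},{0,3},{0,4},{1,2},{3,4}}" by code_simp
lemma pR4: "Set.filter (\<lambda>z. dd pD {1,3} z \<noteq> dd pD {2,3} z) (set pl) = {{0,1},{0,2},{1,3},{1,4},{2,3},{2,4}}" by code_simp

lemma p_main: assumes "k \<ge> 1" shows "frac_tdim k petersen_V petersen_E = 5/3"
proof (rule frac_tdim_eqI)
  show "trunc_resolving_fn k petersen_V petersen_E (\<lambda>_. 1/6)"
    unfolding trunc_resolving_fn_def using pc6 pRk[OF assms] pV_pl by auto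
  show "sum (\<lambda>_. 1/6) petersen_V = (5/3::real)" using card_pl pV_pl by simp
  fix h assume h: "trunc_resolving_fn k petersen_V petersen_E h"
  have c: "\<And>x y. x \<in> set pl \<Longrightarrow> y \<in> set pl \<Longrightarrow> x \<noteq> y \<Longrightarrow>
     1 \<le> sum h (Set.filter (\<lambda>z. dd pD x z \<noteq> dd pD y z) (set pl))"
    using h pRk[OF assms] pV_pl unfolding trunc_resolving_fn_def by metis
  have nn: "\<And>x. x \<in> set pl \<Longrightarrow> 0 \<le> h x" using h pV_pl unfolding trunc_resolving_fn_def by auto
  have c0: "1 \<le> sum h {{0,1},{0,2},{1,3},{1,4},{2,3},{2,4}}" using c[of "{0,1}" "{0,2}"] unfolding pR0 by (simp add: pl_def doubleton_eq_iff)
  have s0: "sum h {{0,1},{0,2},{1,3},{1,4},{2,3},{2,4}} = h {0,1} + h {0,2} + h {1,3} + h {1,4} + h {2,3} + h {2,4}" by (simp add: doubleton_eq_iff)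
  have c1: "1 \<le> sum h {{0,3},{0,4},{1,2},{1,4},{2,4},{3,4}}" using c[of "{0,3}" "{1,2}"] unfolding pR1 by (simp add: pl_def doubleton_eq_iff)
  have s1: "sum h {{0,3},{0,4},{1,2},{1,4},{2,4},{3,4}} = h {0,3} + h {0,4} + h {1,2} + h {1,4} + h {2,4} + h {3,4}" by (simp add: doubleton_eq_iff)
  have c2: "1 \<le> sum h {{0,3},{0,4},{1,2},{1,3},{2,3},{3,4}}" using c[of "{0,4}" "{1,2}"] unfolding pR2 by (simp add: pl_def doubleton_eq_iff)
  have s2: "sum h {{0,3},{0,4},{1,2},{1,3},{2,3},{3,4}} = h {0,3} + h {0,4} + h {1,2} + h {1,3} + h {2,3} + h {3,4}" by (simp add: doubleton_eq_iff)
  have c3: "1 \<le> sum h {{0,1},{0,2},{0,3},{0,4},{1,2},{3,4}}" using c[of "{1,2}" "{3,4}"] unfolding pR3 by (simp add: pl_def doubleton_eq_iff)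
  have s3: "sum h {{0,1},{0,2},{0,3},{0,4},{1,2},{3,4}} = h {0,1} + h {0,2} + h {0,3} + h {0,4} + h {1,2} + h {3,4}" by (simp add: doubleton_eq_iff)
  have c4: "1 \<le> sum h {{0,1},{0,2},{1,3},{1,4},{2,3},{2,4}}" using c[of "{1,3}" "{2,3}"] unfolding pR4 by (simp add: pl_def doubleton_eq_iff)
  have s4: "sum h {{0,1},{0,2},{1,3},{1,4},{2,3},{2,4}} = h {0,1} + h {0,2} + h {1,3} + h {1,4} + h {2,3} + h {2,4}" by (simp add: doubleton_eq_iff)
  have sV: "sum h petersen_V = h {0,1} + h {0,2} + h {0,3} + h {0,4} + h {1,2} + h {1,3} + h {1,4} + h {2,3} + h {2,4} + h {3,4}"
    unfolding pV by (simp add: doubleton_eq_iff)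
  show "5/3 \<le> sum h petersen_V" unfolding sV using c0 c1 c2 c3 c4 unfolding s0 s1 s2 s3 s4 by linarith
qed



lemma cmp_V_Sigma: "cmp_V m a = Sigma {..<m} (\<lambda>i. {..<a i})"
  unfolding cmp_V_def by auto

lemma cmp_fin: "finite (cmp_V m a)" unfolding cmp_V_Sigma by auto

lemma cmp_card: "card (cmp_V m a) = (\<Sum>i<m. a i)"
  unfolding cmp_V_Sigma by (simp add: card_SigmaI)

lemma cmp_diam2:
  assumes m: "m \<ge> 2" and a: "\<forall>i<m. a i \<ge> 1"
  shows "diam2 (cmp_V m a) (cmp_E m a)"
  unfolding diam2_def
proof (intro ballI impI)
  fix x y assume x: "x \<in> cmp_V m a" and y: "y \<in> cmp_V m a" and "x \<noteq> y" and ne: "\<not> cmp_E m a x y"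
  define i' where "i' = (if fst x = 0 then 1 else 0::nat)"
  have "(i', 0) \<in> cmp_V m a" using m a[rule_format, of 0] a[rule_format, of 1] unfolding cmp_V_def i'_def by auto
  moreover have "fst x = fst y" using ne x y unfolding cmp_E_def by auto
  moreover have "i' \<noteq> fst x" unfolding i'_def by auto
  ultimately show "\<exists>z\<in>cmp_V m a. cmp_E m a x z \<and> cmp_E m a z y"
    using x y unfolding cmp_E_def by (intro bexI[of _ "(i',0)"]) auto
qed

lemma cmp_dd: "u \<in> cmp_V m a \<Longrightarrow> z \<in> cmp_V m a \<Longrightarrow>
   dd (cmp_E m a) u z = (if u = z then 0 else if fst u \<noteq> fst z then 1 else 2)"
  unfolding dd_def cmp_E_def by auto

lemma cmp_Rk:
  assumes "k \<ge> 1" "m \<ge> 2" "\<forall>i<m. a i \<ge> 1" "u \<in> cmp_V m a" "v \<in> cmp_V m a"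
  shows "Rk k (cmp_V m a) (cmp_E m a) u v = {z \<in> cmp_V m a.
     (if u = z then 0 else if fst u \<noteq> fst z then 1 else 2::nat) \<noteq> (if v = z then 0 else if fst v \<noteq> fst z then 1 else 2)}"
proof -
  have "\<And>z. z \<in> cmp_V m a \<Longrightarrow> (dd (cmp_E m a) u z \<noteq> dd (cmp_E m a) v z) =
     ((if u = z then 0 else if fst u \<noteq> fst z then 1 else 2::nat) \<noteq> (if v = z then 0 else if fst v \<noteq> fst z then 1 else 2))"
    using cmp_dd[OF assms(4)] cmp_dd[OF assms(5)] by presburger
  then show ?thesis unfolding Rk_dd[OF assms(1) cmp_diam2[OF assms(2,3)] assms(4,5)] by blast
qed

lemma cmp_lower:
  fixes h :: "nat \<times> nat \<Rightarrow> real"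
  assumes k: "k \<ge> 1" and m: "m \<ge> 2" and a: "\<forall>i<m. a i \<ge> 1"
    and h: "trunc_resolving_fn k (cmp_V m a) (cmp_E m a) h"
  shows "(if card {i. i < m \<and> a i = 1} = 1 then (real (\<Sum>i<m. a i) - 1) / 2 else real (\<Sum>i<m. a i) / 2)
     \<le> sum h (cmp_V m a)"
proof -
  define I1 where "I1 = {i. i < m \<and> a i = 1}"
  define I2 where "I2 = {i. i < m \<and> a i \<noteq> 1}"
  have fin1: "finite I1" and fin2: "finite I2" unfolding I1_def I2_def by auto
  have un: "{..<m} = I1 \<union> I2" and dj: "I1 \<inter> I2 = {}" unfolding I1_def I2_def by auto
  have nn: "\<And>z. z \<in> cmp_V m a \<Longrightarrow> 0 \<le> h z" using h unfolding trunc_resolving_fn_def by auto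
  have sV: "sum h (cmp_V m a) = (\<Sum>i<m. \<Sum>j<a i. h (i,j))"
    unfolding cmp_V_Sigma by (subst sum.Sigma) auto
  also have "\<dots> = (\<Sum>i\<in>I1. \<Sum>j<a i. h (i,j)) + (\<Sum>i\<in>I2. \<Sum>j<a i. h (i,j))"
    unfolding un using fin1 fin2 dj by (rule sum.union_disjoint)
  also have "(\<Sum>i\<in>I1. \<Sum>j<a i. h (i,j)) = (\<Sum>i\<in>I1. h (i,0))"
    by (rule sum.cong) (auto simp: I1_def)
  finally have sV2: "sum h (cmp_V m a) = (\<Sum>i\<in>I1. h (i,0)) + (\<Sum>i\<in>I2. \<Sum>j<a i. h (i,j))" .
  have part: "real (a i) / 2 \<le> (\<Sum>j<a i. h (i,j))" if i: "i \<in> I2" for i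
  proof -
    have "real (card {..<a i}) / 2 \<le> (\<Sum>j<a i. h (i,j))"
    proof (rule pair_bound)
      show "card {..<a i} \<noteq> 1" using i unfolding I2_def by simp
      fix j j' assume jj: "j \<in> {..<a i}" "j' \<in> {..<a i}" "j \<noteq> j'"
      have uv: "(i,j) \<in> cmp_V m a" "(i,j') \<in> cmp_V m a" using i jj unfolding I2_def cmp_V_def by auto
      show "1 \<le> h (i,j) + h (i,j')"
        by (rule pair_from_R[OF h uv]) (use jj in \<open>auto simp: cmp_Rk[OF k m a uv]\<close>)
    qed auto
    then show ?thesis by simp
  qed
  have p2: "(\<Sum>i\<in>I2. real (a i) / 2) \<le> (\<Sum>i\<in>I2. \<Sum>j<a i. h (i,j))"
    by (rule sum_mono) (rule part)
  have nsum: "(\<Sum>i<m. a i) = card I1 + (\<Sum>i\<in>I2. a i)"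
  proof -
    have "(\<Sum>i<m. a i) = (\<Sum>i\<in>I1. a i) + (\<Sum>i\<in>I2. a i)"
      unfolding un using fin1 fin2 dj by (rule sum.union_disjoint)
    moreover have "(\<Sum>i\<in>I1. a i) = card I1" unfolding I1_def by simp
    ultimately show ?thesis by simp
  qed
  have rn: "real (\<Sum>i<m. a i) = real (card I1) + (\<Sum>i\<in>I2. real (a i))"
    unfolding nsum by simp
  have p2': "(\<Sum>i\<in>I2. real (a i)) / 2 \<le> (\<Sum>i\<in>I2. \<Sum>j<a i. h (i,j))"
    using p2 by (simp add: sum_divide_distrib)
  show ?thesis
  proof (cases "card I1 = 1")
    case True
    have "0 \<le> (\<Sum>i\<in>I1. h (i,0))"
      by (rule sum_nonneg) (rule nn, use a in \<open>auto simp: I1_def cmp_V_def\<close>)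
    then show ?thesis using True sV2 p2' rn unfolding I1_def[symmetric] by simp
  next
    case False
    have "real (card I1) / 2 \<le> (\<Sum>i\<in>I1. h (i,0))"
    proof (rule pair_bound[OF fin1 False])
      fix i i' assume ii: "i \<in> I1" "i' \<in> I1" "i \<noteq> i'"
      have uv: "(i,0) \<in> cmp_V m a" "(i',0) \<in> cmp_V m a" using ii unfolding I1_def cmp_V_def by auto
      have "Rk k (cmp_V m a) (cmp_E m a) (i,0) (i',0) \<subseteq> {(i,0), (i',0)}"
      proof
        fix z assume z: "z \<in> Rk k (cmp_V m a) (cmp_E m a) (i,0) (i',0)"
        obtain p q where zpq: "z = (p,q)" by fastforce
        have "q < a p" "p < m" using z zpq unfolding cmp_Rk[OF k m a uv] by (auto simp: cmp_V_def)
        then show "z \<in> {(i,0), (i',0)}" using z ii zpq unfolding cmp_Rk[OF k m a uv] I1_def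
          by (auto split: if_splits)
      qed
      then show "1 \<le> h (i,0) + h (i',0)" using pair_from_R[OF h uv] ii by auto
    qed
    then show ?thesis using False sV2 p2' rn unfolding I1_def[symmetric] by simp
  qed
qed

lemma cmp_upper:
  assumes k: "k \<ge> 1" and m: "m \<ge> 2" and a: "\<forall>i<m. a i \<ge> 1"
  shows "\<exists>h. trunc_resolving_fn k (cmp_V m a) (cmp_E m a) h \<and> sum h (cmp_V m a) =
     (if card {i. i < m \<and> a i = 1} = 1 then (real (\<Sum>i<m. a i) - 1) / 2 else real (\<Sum>i<m. a i) / 2)"
proof -
  have d2: "diam2 (cmp_V m a) (cmp_E m a)" by (rule cmp_diam2[OF m a])
  have finR: "finite (Rk k (cmp_V m a) (cmp_E m a) u v)" for u v
    using cmp_fin unfolding Rk_def by auto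
  show ?thesis
  proof (cases "card {i. i < m \<and> a i = 1} = 1")
    case False
    define h :: "nat \<times> nat \<Rightarrow> real" where "h = (\<lambda>_. 1/2)"
    have "trunc_resolving_fn k (cmp_V m a) (cmp_E m a) h"
      unfolding trunc_resolving_fn_def
    proof (intro conjI ballI impI)
      fix u v assume uv: "u \<in> cmp_V m a" "v \<in> cmp_V m a" "u \<noteq> v"
      have "sum h {u,v} \<le> sum h (Rk k (cmp_V m a) (cmp_E m a) u v)"
        using R_contains[OF uv k d2] finR by (intro sum_mono2) (auto simp: h_def)
      then show "1 \<le> sum h (Rk k (cmp_V m a) (cmp_E m a) u v)" using uv by (simp add: h_def)
    qed (auto simp: h_def)
    moreover have "sum h (cmp_V m a) = real (\<Sum>i<m. a i) / 2"
      unfolding h_def using cmp_card[of m a] by simp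
    ultimately show ?thesis using False by auto
  next
    case True
    then obtain i0 where I1: "{i. i < m \<and> a i = 1} = {i0}" by (meson card_1_singletonE)
    then have i0: "i0 < m" "a i0 = 1" by auto
    define v0 where "v0 = (i0, 0::nat)"
    have v0V: "v0 \<in> cmp_V m a" using i0 unfolding v0_def cmp_V_def by auto
    define h :: "nat \<times> nat \<Rightarrow> real" where "h = (\<lambda>z. if z = v0 then 0 else 1/2)"
    have other: "\<exists>w\<in>cmp_V m a. w \<noteq> x \<and> w \<noteq> v0 \<and> fst w = fst x" if x: "x \<in> cmp_V m a" "x \<noteq> v0" for x
    proof -
      obtain p q where xpq: "x = (p,q)" by fastforce
      have pq: "p < m" "q < a p" using x xpq unfolding cmp_V_def by auto
      have "p \<noteq> i0" using x xpq pq i0 unfolding v0_def by auto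
      then have "a p \<noteq> 1" using I1 pq by auto
      then have ap: "a p \<ge> 2" using a pq by force
      define q' where "q' = (if q = 0 then 1 else 0::nat)"
      have "(p,q') \<in> cmp_V m a" using pq ap unfolding cmp_V_def q'_def by auto
      moreover have "(p,q') \<noteq> x" "(p, q') \<noteq> v0" using xpq \<open>p \<noteq> i0\<close> unfolding q'_def v0_def by auto
      ultimately show ?thesis using xpq by (intro bexI[of _ "(p,q')"]) auto
    qed
    have "trunc_resolving_fn k (cmp_V m a) (cmp_E m a) h"
      unfolding trunc_resolving_fn_def
    proof (intro conjI ballI impI)
      fix u v assume uv: "u \<in> cmp_V m a" "v \<in> cmp_V m a" "u \<noteq> v"
      let ?R = "Rk k (cmp_V m a) (cmp_E m a) u v"
      have nn: "\<forall>z\<in>?R. 0 \<le> h z" by (auto simp: h_def)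
      show "1 \<le> sum h ?R"
      proof (cases "u = v0 \<or> v = v0")
        case False
        have "sum h {u,v} \<le> sum h ?R"
          using R_contains[OF uv k d2] finR nn by (intro sum_mono2) auto
        then show ?thesis using uv False by (simp add: h_def)
      next
        case True
        define x where "x = (if u = v0 then v else u)"
        have x: "x \<in> {u,v}" "x \<noteq> v0" "x \<in> cmp_V m a" using uv True unfolding x_def by auto
        then obtain w where w: "w \<in> cmp_V m a" "w \<noteq> x" "w \<noteq> v0" "fst w = fst x" using other by blast
        have fx: "fst x \<noteq> i0"
          using x i0 unfolding v0_def cmp_V_def by (cases x) auto
        have "w \<in> ?R"
          unfolding cmp_Rk[OF k m a uv(1,2)] using True x w fx uv by (auto simp: v0_def)
        moreover have "x \<in> ?R" using R_contains[OF uv k d2] x by auto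
        ultimately have "sum h {x,w} \<le> sum h ?R"
          using finR nn by (intro sum_mono2) auto
        then show ?thesis using x w by (simp add: h_def)
      qed
    qed (auto simp: h_def)
    moreover have "sum h (cmp_V m a) = (real (\<Sum>i<m. a i) - 1) / 2"
    proof -
      have "sum h (cmp_V m a) = h v0 + sum h (cmp_V m a - {v0})"
        using cmp_fin v0V by (simp add: sum.remove)
      also have "sum h (cmp_V m a - {v0}) = sum (\<lambda>_. 1/2) (cmp_V m a - {v0})"
        by (rule sum.cong) (auto simp: h_def)
      also have "\<dots> = real (card (cmp_V m a - {v0})) / 2" by simp
      also have "card (cmp_V m a - {v0}) = card (cmp_V m a) - 1" using cmp_fin v0V by simp
      also have "card (cmp_V m a) \<ge> 1" using cmp_fin v0V by (metis One_nat_def Suc_leI card_gt_0_iff empty_iff)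
      then have "real (card (cmp_V m a) - 1) = real (card (cmp_V m a)) - 1" by (simp add: of_nat_diff)
      finally show ?thesis using cmp_card[of m a] by (simp add: h_def v0_def)
    qed
    ultimately show ?thesis using True by auto
  qed
qed

lemma cmp_main:
  assumes k: "k \<ge> 1" and m: "m \<ge> 2" and a: "\<forall>i<m. a i \<ge> 1"
  shows "frac_tdim k (cmp_V m a) (cmp_E m a) =
     (if card {i. i < m \<and> a i = 1} = 1 then (real (\<Sum>i<m. a i) - 1) / 2 else real (\<Sum>i<m. a i) / 2)"
proof -
  obtain h where h1: "trunc_resolving_fn k (cmp_V m a) (cmp_E m a) h" "sum h (cmp_V m a) =
     (if card {i. i < m \<and> a i = 1} = 1 then (real (\<Sum>i<m. a i) - 1) / 2 else real (\<Sum>i<m. a i) / 2)"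
    using cmp_upper[OF k m a] by blast
  from frac_tdim_eqI[OF h1 cmp_lower[OF k m a]] show ?thesis by blast
qed



definition ws :: "nat \<Rightarrow> nat \<Rightarrow> nat" where "ws n i = (if i + 1 = n then 0 else i + 1)"
definition wp :: "nat \<Rightarrow> nat \<Rightarrow> nat" where "wp n i = (if i = 0 then n - 1 else i - 1)"

lemma mod_ws: "i < n \<Longrightarrow> (i + 1) mod n = ws n i"
  unfolding ws_def by auto

lemma ws_wp_iff: "i < n \<Longrightarrow> j < n \<Longrightarrow> (i = ws n j) \<longleftrightarrow> (j = wp n i)"
  unfolding ws_def wp_def by auto

lemma wE: assumes "n \<ge> 3" "i \<le> n" "j \<le> n"
  shows "wheel_E n i j \<longleftrightarrow> ((i \<noteq> j \<and> (i = n \<or> j = n)) \<or> (i < n \<and> j < n \<and> (j = ws n i \<or> j = wp n i)))"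
proof (cases "i < n \<and> j < n")
  case True
  then have ij: "i < n" "j < n" by auto
  show ?thesis unfolding wheel_E_def mod_ws[OF ij(1)] mod_ws[OF ij(2)] ws_wp_iff[OF ij(1,2)]
    using ij assms by (auto simp: ws_def wp_def)
next
  case False
  then show ?thesis unfolding wheel_E_def using assms by auto
qed

definition wD :: "nat \<Rightarrow> nat \<Rightarrow> nat \<Rightarrow> nat" where
  "wD n x z = (if x = z then 0 else if x = n \<or> z = n then 1 else if z = ws n x \<or> z = wp n x then 1 else 2)"

lemma w_dd: "n \<ge> 3 \<Longrightarrow> x \<le> n \<Longrightarrow> z \<le> n \<Longrightarrow> dd (wheel_E n) x z = wD n x z"
  unfolding dd_def wD_def using wE[of n x z] by auto

lemma w_diam2: assumes "n \<ge> 3" shows "diam2 (wheel_V n) (wheel_E n)"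
  unfolding diam2_def
proof (intro ballI impI)
  fix x y assume x: "x \<in> wheel_V n" and y: "y \<in> wheel_V n" and "x \<noteq> y" and ne: "\<not> wheel_E n x y"
  then have "x < n" "y < n" using wE[OF assms, of x y] unfolding wheel_V_def by auto
  then show "\<exists>z\<in>wheel_V n. wheel_E n x z \<and> wheel_E n z y"
    unfolding wheel_V_def using wE[OF assms] by (intro bexI[of _ n]) auto
qed

lemma w_Rk: assumes "k \<ge> 1" "n \<ge> 3" "x \<in> wheel_V n" "y \<in> wheel_V n"
  shows "Rk k (wheel_V n) (wheel_E n) x y = {z\<in>wheel_V n. wD n x z \<noteq> wD n y z}"
  using assms Rk_dd[OF assms(1) w_diam2[OF assms(2)] assms(3,4)] w_dd[OF assms(2)]
  unfolding wheel_V_def by auto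

lemma wV_list: "wheel_V n = set [0..<Suc n]"
  unfolding wheel_V_def by auto

lemma fin_Rk: "finite (Rk k (wheel_V n) (wheel_E n) x y)"
  unfolding Rk_def wheel_V_def by auto

lemma w_Rk_list: assumes "k \<ge> 1" "n \<ge> 3" "x \<in> wheel_V n" "y \<in> wheel_V n"
  shows "Rk k (wheel_V n) (wheel_E n) x y = Set.filter (\<lambda>z. wD n x z \<noteq> wD n y z) (set [0..<Suc n])"
  using w_Rk[OF assms] wV_list[of n] by simp

lemma w_res_nn: "trunc_resolving_fn k V E h \<Longrightarrow> z \<in> V \<Longrightarrow> 0 \<le> h z"
  unfolding trunc_resolving_fn_def by auto

lemma w_res_c: "trunc_resolving_fn k V E h \<Longrightarrow> x \<in> V \<Longrightarrow> y \<in> V \<Longrightarrow> x \<noteq> y \<Longrightarrow> 1 \<le> sum h (Rk k V E x y)"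
  unfolding trunc_resolving_fn_def by auto

lemma sumV3: "sum h (wheel_V 3) = h 0 + h 1 + h 2 + (h 3 :: real)"
  unfolding wV_list by (simp add: numeral_eq_Suc)
lemma sumV4: "sum h (wheel_V 4) = h 0 + h 1 + h 2 + h 3 + (h 4 :: real)"
  unfolding wV_list by (simp add: numeral_eq_Suc)
lemma sumV5: "sum h (wheel_V 5) = h 0 + h 1 + h 2 + h 3 + h 4 + (h 5 :: real)"
  unfolding wV_list by (simp add: numeral_eq_Suc)

lemma w3R: "Set.filter (\<lambda>z. wD 3 0 z \<noteq> wD 3 1 z) (set [0..<Suc 3]) = {0,1}"
  "Set.filter (\<lambda>z. wD 3 2 z \<noteq> wD 3 3 z) (set [0..<Suc 3]) = {2,3}"
  by code_simp+

lemma w3: assumes k: "k \<ge> 1" shows "frac_tdim k (wheel_V 3) (wheel_E 3) = 2"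
proof (rule frac_tdim_eqI)
  show "trunc_resolving_fn k (wheel_V 3) (wheel_E 3) (\<lambda>_. 1/2)"
    unfolding trunc_resolving_fn_def
  proof (intro conjI ballI impI)
    fix x y assume xy: "x \<in> wheel_V 3" "y \<in> wheel_V 3" "x \<noteq> y"
    have "sum (\<lambda>_. 1/2::real) {x,y} \<le> sum (\<lambda>_. 1/2) (Rk k (wheel_V 3) (wheel_E 3) x y)"
      using R_contains[OF xy k w_diam2] fin_Rk by (intro sum_mono2) auto
    then show "1 \<le> sum (\<lambda>_. 1/2::real) (Rk k (wheel_V 3) (wheel_E 3) x y)" using xy by simp
  qed auto
  show "sum (\<lambda>_. 1/2) (wheel_V 3) = (2::real)" unfolding sumV3 by simp
  fix h assume h: "trunc_resolving_fn k (wheel_V 3) (wheel_E 3) h"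
  have "1 \<le> sum h {0,1}" using w_res_c[OF h, of 0 1] w_Rk_list[OF k, of 3 0 1] w3R
    by (simp add: wheel_V_def)
  moreover have "1 \<le> sum h {2,3}" using w_res_c[OF h, of 2 3] w_Rk_list[OF k, of 3 2 3] w3R
    by (simp add: wheel_V_def)
  ultimately show "2 \<le> sum h (wheel_V 3)" unfolding sumV3 by simp
qed

lemma cyc_sum:
  fixes c d :: real
  assumes "finite R" "0 \<le> c" "0 \<le> d"
  shows "c * card {z\<in>R. z < n} \<le> sum (\<lambda>z. if z < n then c else d) R"
proof -
  have "sum (\<lambda>z. if z < n then c else d) {z\<in>R. z < n} \<le> sum (\<lambda>z. if z < n then c else d) R"
    using assms by (intro sum_mono2) auto
  moreover have "sum (\<lambda>z. if z < n then c else d) {z\<in>R. z < n} = c * card {z\<in>R. z < n}"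
    by simp
  ultimately show ?thesis by (simp add: mult.commute)
qed

lemma le3: "(3::nat) \<le> 4" "(3::nat) \<le> 5" by simp_all

lemma w4c: "\<forall>x\<in>set [0..<Suc 4]. \<forall>y\<in>set [0..<Suc 4]. x \<noteq> y \<longrightarrow>
   2 \<le> card {z \<in> Set.filter (\<lambda>z. wD 4 x z \<noteq> wD 4 y z) (set [0..<Suc 4]). z < 4}"
  by code_simp

lemma w4R: "Set.filter (\<lambda>z. wD 4 0 z \<noteq> wD 4 2 z) (set [0..<Suc 4]) = {0,2}"
  "Set.filter (\<lambda>z. wD 4 1 z \<noteq> wD 4 3 z) (set [0..<Suc 4]) = {1,3}"
  by code_simp+

lemma w4: assumes k: "k \<ge> 1" shows "frac_tdim k (wheel_V 4) (wheel_E 4) = 2"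
proof (rule frac_tdim_eqI)
  show "trunc_resolving_fn k (wheel_V 4) (wheel_E 4) (\<lambda>z. if z < 4 then 1/2 else 0)"
    unfolding trunc_resolving_fn_def
  proof (intro conjI ballI impI)
    fix x y assume xy: "x \<in> wheel_V 4" "y \<in> wheel_V 4" "x \<noteq> y"
    have "1/2 * card {z\<in>Rk k (wheel_V 4) (wheel_E 4) x y. z < 4} \<le> sum (\<lambda>z. if z < 4 then 1/2 else (0::real)) (Rk k (wheel_V 4) (wheel_E 4) x y)"
      using fin_Rk by (intro cyc_sum) auto
    moreover have "2 \<le> card {z\<in>Rk k (wheel_V 4) (wheel_E 4) x y. z < 4}"
      using w4c xy unfolding w_Rk_list[OF k _ xy(1,2), OF le3(1)] by (simp add: wV_list)
    ultimately show "1 \<le> sum (\<lambda>z. if z < 4 then 1/2 else (0::real)) (Rk k (wheel_V 4) (wheel_E 4) x y)"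
      by linarith
  qed auto
  show "sum (\<lambda>z. if z < 4 then 1/2 else 0) (wheel_V 4) = (2::real)" unfolding sumV4 by simp
  fix h assume h: "trunc_resolving_fn k (wheel_V 4) (wheel_E 4) h"
  have "1 \<le> sum h {0,2}" using w_res_c[OF h, of 0 2] w_Rk_list[OF k, of 4 0 2] w4R
    by (simp add: wheel_V_def)
  moreover have "1 \<le> sum h {1,3}" using w_res_c[OF h, of 1 3] w_Rk_list[OF k, of 4 1 3] w4R
    by (simp add: wheel_V_def)
  moreover have "0 \<le> h 4" using w_res_nn[OF h, of 4] by (simp add: wheel_V_def)
  ultimately show "2 \<le> sum h (wheel_V 4)" unfolding sumV4 by simp
qed

lemma w5c: "\<forall>x\<in>set [0..<Suc 5]. \<forall>y\<in>set [0..<Suc 5]. x \<noteq> y \<longrightarrow>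
   4 \<le> card (Set.filter (\<lambda>z. wD 5 x z \<noteq> wD 5 y z) (set [0..<Suc 5]))"
  by code_simp

lemma w5R:
  "Set.filter (\<lambda>z. wD 5 5 z \<noteq> wD 5 0 z) (set [0..<Suc 5]) = {0,2,3,5}"
  "Set.filter (\<lambda>z. wD 5 0 z \<noteq> wD 5 1 z) (set [0..<Suc 5]) = {0,1,2,4}"
  "Set.filter (\<lambda>z. wD 5 5 z \<noteq> wD 5 1 z) (set [0..<Suc 5]) = {1,3,4,5}"
  "Set.filter (\<lambda>z. wD 5 1 z \<noteq> wD 5 2 z) (set [0..<Suc 5]) = {0,1,2,3}"
  "Set.filter (\<lambda>z. wD 5 5 z \<noteq> wD 5 2 z) (set [0..<Suc 5]) = {0,2,4,5}"
  "Set.filter (\<lambda>z. wD 5 2 z \<noteq> wD 5 3 z) (set [0..<Suc 5]) = {1,2,3,4}"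
  "Set.filter (\<lambda>z. wD 5 5 z \<noteq> wD 5 3 z) (set [0..<Suc 5]) = {0,1,3,5}"
  "Set.filter (\<lambda>z. wD 5 3 z \<noteq> wD 5 4 z) (set [0..<Suc 5]) = {0,2,3,4}"
  "Set.filter (\<lambda>z. wD 5 5 z \<noteq> wD 5 4 z) (set [0..<Suc 5]) = {1,2,4,5}"
  "Set.filter (\<lambda>z. wD 5 4 z \<noteq> wD 5 0 z) (set [0..<Suc 5]) = {0,1,3,4}"
  by code_simp+

lemma w5: assumes k: "k \<ge> 1" shows "frac_tdim k (wheel_V 5) (wheel_E 5) = 3/2"
proof (rule frac_tdim_eqI)
  show "trunc_resolving_fn k (wheel_V 5) (wheel_E 5) (\<lambda>_. 1/4)"
    unfolding trunc_resolving_fn_def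
  proof (intro conjI ballI impI)
    fix x y assume xy: "x \<in> wheel_V 5" "y \<in> wheel_V 5" "x \<noteq> y"
    have "4 \<le> card (Rk k (wheel_V 5) (wheel_E 5) x y)"
      using w5c xy unfolding w_Rk_list[OF k _ xy(1,2), OF le3(2)] by (simp add: wV_list)
    then show "1 \<le> sum (\<lambda>_. 1/4::real) (Rk k (wheel_V 5) (wheel_E 5) x y)" by simp
  qed auto
  show "sum (\<lambda>_. 1/4) (wheel_V 5) = (3/2::real)" unfolding sumV5 by simp
  fix h assume h: "trunc_resolving_fn k (wheel_V 5) (wheel_E 5) h"
  have c0: "1 \<le> sum h {0,2,3,5}" using w_res_c[OF h, of 5 0] w_Rk_list[OF k, of 5 5 0] w5R
    by (simp add: wheel_V_def)
  have c1: "1 \<le> sum h {0,1,2,4}" using w_res_c[OF h, of 0 1] w_Rk_list[OF k, of 5 0 1] w5R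
    by (simp add: wheel_V_def)
  have c2: "1 \<le> sum h {1,3,4,5}" using w_res_c[OF h, of 5 1] w_Rk_list[OF k, of 5 5 1] w5R
    by (simp add: wheel_V_def)
  have c3: "1 \<le> sum h {0,1,2,3}" using w_res_c[OF h, of 1 2] w_Rk_list[OF k, of 5 1 2] w5R
    by (simp add: wheel_V_def)
  have c4: "1 \<le> sum h {0,2,4,5}" using w_res_c[OF h, of 5 2] w_Rk_list[OF k, of 5 5 2] w5R
    by (simp add: wheel_V_def)
  have c5: "1 \<le> sum h {1,2,3,4}" using w_res_c[OF h, of 2 3] w_Rk_list[OF k, of 5 2 3] w5R
    by (simp add: wheel_V_def)
  have c6: "1 \<le> sum h {0,1,3,5}" using w_res_c[OF h, of 5 3] w_Rk_list[OF k, of 5 5 3] w5R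
    by (simp add: wheel_V_def)
  have c7: "1 \<le> sum h {0,2,3,4}" using w_res_c[OF h, of 3 4] w_Rk_list[OF k, of 5 3 4] w5R
    by (simp add: wheel_V_def)
  have c8: "1 \<le> sum h {1,2,4,5}" using w_res_c[OF h, of 5 4] w_Rk_list[OF k, of 5 5 4] w5R
    by (simp add: wheel_V_def)
  have c9: "1 \<le> sum h {0,1,3,4}" using w_res_c[OF h, of 4 0] w_Rk_list[OF k, of 5 4 0] w5R
    by (simp add: wheel_V_def)
  show "3/2 \<le> sum h (wheel_V 5)" unfolding sumV5 using c0 c1 c2 c3 c4 c5 c6 c7 c8 c9 by simp
qed

definition wgood :: "nat \<Rightarrow> nat \<Rightarrow> nat \<Rightarrow> bool" where
  "wgood n x y \<longleftrightarrow> (\<exists>a b c d. distinct [a,b,c,d] \<and> a < n \<and> b < n \<and> c < n \<and> d < n \<and>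
     wD n x a \<noteq> wD n y a \<and> wD n x b \<noteq> wD n y b \<and> wD n x c \<noteq> wD n y c \<and> wD n x d \<noteq> wD n y d)"

lemma wgood_sym: "wgood n x y \<Longrightarrow> wgood n y x"
  unfolding wgood_def by metis

definition rot :: "nat \<Rightarrow> nat \<Rightarrow> nat \<Rightarrow> nat" where "rot n i k = (i + k) mod n"

lemma rot_lt: "0 < n \<Longrightarrow> rot n i k < n" unfolding rot_def by simp

lemma rot_inj: assumes "i < n" "k < n" "l < (n::nat)"
  shows "(rot n i k = rot n i l) \<longleftrightarrow> k = l"
proof
  assume h: "rot n i k = rot n i l"
  have e1: "(i + k) mod n = (if i + k < n then i + k else i + k - n)"
    using assms by (simp add: mod_if)
  have e2: "(i + l) mod n = (if i + l < n then i + l else i + l - n)"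
    using assms by (simp add: mod_if)
  show "k = l" using h assms unfolding rot_def e1 e2 by (auto split: if_splits)
qed simp

lemma rot0: "i < n \<Longrightarrow> rot n i 0 = i" unfolding rot_def by simp

lemma rot_self: assumes "i < n" "k < (n::nat)"
  shows "(rot n i k = i) \<longleftrightarrow> k = 0" "(i = rot n i k) \<longleftrightarrow> k = 0"
  using rot_inj[OF assms(1) assms(2), of 0] assms rot0[OF assms(1)] by auto

lemma ws_eq: "i < n \<Longrightarrow> ws n i = rot n i 1"
  unfolding rot_def by (metis mod_ws)

lemma wp_eq: "i < n \<Longrightarrow> wp n i = rot n i (n - 1)"
  unfolding wp_def rot_def by (auto simp: mod_if)

lemma ws_lt: "i < n \<Longrightarrow> ws n i < n" unfolding ws_def by auto

lemma ws_rot: "0 < n \<Longrightarrow> ws n (rot n i k) = rot n i (k + 1)"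
  unfolding rot_def by (metis mod_ws add.assoc mod_add_left_eq mod_less_divisor)

lemma wgood_hub: assumes n: "n \<ge> 6" and y: "y < n" shows "wgood n n y"
proof -
  have n0: "0 < n" "2 < n" "3 < n" "4 < n" "n - 1 < n" "n - 1 \<noteq> 2" "n - 1 \<noteq> 3" "n - 1 \<noteq> 4" "1 < n" using n by auto
  define b where "b = rot n y 2"
  define c where "c = rot n y 3"
  define d where "d = rot n y 4"
  have lt: "b < n" "c < n" "d < n" unfolding b_def c_def d_def using n0 by (auto simp: rot_lt)
  have ne: "b \<noteq> n" "c \<noteq> n" "d \<noteq> n" "y \<noteq> n" using lt y by auto
  have "distinct [y,b,c,d]" unfolding b_def c_def d_def using y n0 by (simp add: rot_inj rot_self)
  moreover have "wD n n y \<noteq> wD n y y \<and> wD n n b \<noteq> wD n y b \<and> wD n n c \<noteq> wD n y c \<and> wD n n d \<noteq> wD n y d"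
    using ne unfolding wD_def ws_eq[OF y] wp_eq[OF y] unfolding b_def c_def d_def using y n0
    by (simp add: rot_inj rot_self)
  ultimately show ?thesis unfolding wgood_def using lt y by blast
qed

lemma wgood_adj: assumes n: "n \<ge> 6" and x: "x < n" shows "wgood n x (ws n x)"
proof -
  have n0: "0 < n" "2 < n" "1 < n" "n - 1 < n" "n - 1 \<noteq> 2" "n - 1 \<noteq> 1" "n - 1 \<noteq> 0" using n by auto
  define a where "a = rot n x (n - 1)"
  define c where "c = rot n x 1"
  define d where "d = rot n x 2"
  have lt: "a < n" "c < n" "d < n" unfolding a_def c_def d_def using n0 by (auto simp: rot_lt)
  have ne: "a \<noteq> n" "c \<noteq> n" "d \<noteq> n" "x \<noteq> n" using lt x by auto
  have wsc: "ws n c = d" unfolding c_def d_def using ws_rot[OF n0(1), of x 1] unfolding one_add_one .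
  have wpc: "wp n c = x" by (metis ws_wp_iff[OF lt(2) x] ws_eq[OF x] c_def)
  have "distinct [a,x,c,d]" unfolding a_def c_def d_def using x n0 by (simp add: rot_inj rot_self)
  moreover have "wD n x a \<noteq> wD n c a \<and> wD n x x \<noteq> wD n c x \<and> wD n x c \<noteq> wD n c c \<and> wD n x d \<noteq> wD n c d"
    using ne unfolding wD_def wsc wpc ws_eq[OF x] wp_eq[OF x] unfolding a_def c_def d_def using x n0
    by (simp add: rot_inj rot_self)
  moreover have cx: "ws n x = c" using ws_eq[OF x] c_def by simp
  ultimately show ?thesis unfolding wgood_def cx using lt x by blast
qed

lemma wp_lt: "i < n \<Longrightarrow> wp n i < n" unfolding wp_def by auto
lemma ws_ne: "n \<ge> 2 \<Longrightarrow> i < n \<Longrightarrow> ws n i \<noteq> i" unfolding ws_def by auto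
lemma wp_ne: "n \<ge> 2 \<Longrightarrow> i < n \<Longrightarrow> wp n i \<noteq> i" unfolding wp_def by auto
lemma ws_inj: "i < n \<Longrightarrow> j < n \<Longrightarrow> ws n i = ws n j \<longleftrightarrow> i = j" unfolding ws_def by auto
lemma wp_inj: "i < n \<Longrightarrow> j < n \<Longrightarrow> wp n i = wp n j \<longleftrightarrow> i = j" unfolding wp_def by auto
lemma L5: assumes n: "n \<ge> 5" and x: "x < n" and y: "y < n" and h1: "ws n x = wp n y" and h2: "ws n y = wp n x"
  shows False
proof -
  have n0: "0 < n" "4 < n" using n by auto
  have yy: "y = ws n (ws n x)" using ws_wp_iff[OF y ws_lt[OF x]] h1 by blast
  have xx: "x = ws n (ws n y)" using ws_wp_iff[OF x ws_lt[OF y]] h2 by blast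
  have r1: "ws n x = rot n x 1" by (rule ws_eq[OF x])
  have r2: "ws n (rot n x 1) = rot n x 2" using ws_rot[OF n0(1), of x 1] unfolding one_add_one .
  have r3: "ws n (rot n x 2) = rot n x 3" using ws_rot[OF n0(1), of x 2] by simp
  have r4: "ws n (rot n x 3) = rot n x 4" using ws_rot[OF n0(1), of x 3] by simp
  have "rot n x 4 = x" using xx yy r1 r2 r3 r4 by metis
  then show False using rot_self(1)[OF x n0(2)] by simp
qed

lemma wD_nb: assumes "x < n" "y < n" "a < n" "n \<ge> 3" "a = ws n x \<or> a = wp n x" "a \<noteq> y" "a \<noteq> ws n y" "a \<noteq> wp n y"
  shows "wD n x a \<noteq> wD n y a"
  using assms ws_ne[of n x] wp_ne[of n x] unfolding wD_def by auto

lemma wgood_far: assumes n: "n \<ge> 6" and x: "x < n" and y: "y < n" and xy: "x \<noteq> y"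
  and ns: "y \<noteq> ws n x" and np: "y \<noteq> wp n x"
  shows "wgood n x y"
proof -
  have n2: "n \<ge> 2" "n \<ge> 3" "n \<ge> 5" using n by auto
  have ns': "x \<noteq> ws n y" using ws_wp_iff[OF x y] np by auto
  have np': "x \<noteq> wp n y" using ws_wp_iff[OF y x] ns by auto
  define a where "a = (if ws n x \<noteq> wp n y then ws n x else wp n x)"
  define b where "b = (if ws n y \<noteq> wp n x then ws n y else wp n y)"
  have a1: "a = ws n x \<or> a = wp n x" "a < n" unfolding a_def using ws_lt[OF x] wp_lt[OF x] by auto
  have b1: "b = ws n y \<or> b = wp n y" "b < n" unfolding b_def using ws_lt[OF y] wp_lt[OF y] by auto
  have a2: "a \<noteq> y" "a \<noteq> ws n y" "a \<noteq> wp n y" "a \<noteq> x"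
    unfolding a_def using ns np xy ws_inj[OF x y] wp_inj[OF x y] L5[OF n2(3) x y] ws_ne[OF n2(1) x] wp_ne[OF n2(1) x]
    by auto
  have b2: "b \<noteq> x" "b \<noteq> ws n x" "b \<noteq> wp n x" "b \<noteq> y"
    unfolding b_def using ns' np' xy ws_inj[OF x y] wp_inj[OF x y] L5[OF n2(3) x y] ws_ne[OF n2(1) y] wp_ne[OF n2(1) y]
    by auto
  have "a \<noteq> b" using a1 b2 by auto
  moreover have "wD n x a \<noteq> wD n y a" by (rule wD_nb[OF x y a1(2) n2(2) a1(1) a2(1-3)])
  moreover have "wD n y b \<noteq> wD n x b" by (rule wD_nb[OF y x b1(2) n2(2) b1(1) b2(1-3)])
  moreover have "wD n x x \<noteq> wD n y x" "wD n x y \<noteq> wD n y y" using xy unfolding wD_def by auto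
  ultimately show ?thesis unfolding wgood_def using a1 b1 a2 b2 x y xy
    by (intro exI[of _ x] exI[of _ y] exI[of _ a] exI[of _ b]) auto
qed

lemma wgood_all: assumes n: "n \<ge> 6" and x: "x \<le> n" and y: "y \<le> n" and xy: "x \<noteq> y"
  shows "wgood n x y"
proof -
  consider "x = n" | "y = n" | "x < n" "y < n" using x y xy by linarith
  then show ?thesis
  proof cases
    case 1 then show ?thesis using wgood_hub[OF n] y xy by auto
  next
    case 2 then show ?thesis using wgood_hub[OF n] x xy wgood_sym by auto
  next
    case 3
    show ?thesis
    proof (cases "y = ws n x")
      case True then show ?thesis using wgood_adj[OF n 3(1)] by simp
    next
      case F1: False
      show ?thesis
      proof (cases "y = wp n x")
        case True
        then have "x = ws n y" using ws_wp_iff[OF 3(1,2)] by simp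
        then show ?thesis using wgood_adj[OF n 3(2)] wgood_sym by metis
      next
        case False then show ?thesis using wgood_far[OF n 3 xy F1] by simp
      qed
    qed
  qed
qed

lemma sum_insert_le: "finite A \<Longrightarrow> 0 \<le> (h a::real) \<Longrightarrow> sum h (insert a A) \<le> h a + sum h A"
  by (simp add: sum.insert_if)

lemma sum4_le: "(\<forall>z\<in>{a,b,c,d}. 0 \<le> (h z::real)) \<Longrightarrow> sum h {a,b,c,d} \<le> h a + h b + h c + h d"
proof -
  assume nn: "\<forall>z\<in>{a,b,c,d}. 0 \<le> (h z::real)"
  have "sum h {a,b,c,d} \<le> h a + sum h {b,c,d}" using nn by (intro sum_insert_le) auto
  also have "sum h {b,c,d} \<le> h b + sum h {c,d}" using nn by (intro sum_insert_le) auto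
  also have "sum h {c,d} \<le> h c + sum h {d}" using nn by (intro sum_insert_le) auto
  finally show ?thesis by simp
qed

lemma ws_bij: "n \<ge> 2 \<Longrightarrow> bij_betw (ws n) {..<n} {..<n}"
proof (rule bij_betw_imageI)
  show "inj_on (ws n) {..<n}" by (auto intro!: inj_onI simp: ws_inj)
  assume "n \<ge> 2"
  show "ws n ` {..<n} = {..<n}"
  proof
    show "ws n ` {..<n} \<subseteq> {..<n}" using ws_lt by auto
    show "{..<n} \<subseteq> ws n ` {..<n}"
    proof
      fix j assume j: "j \<in> {..<n}"
      then have "j = ws n (wp n j)" using ws_wp_iff[of j n "wp n j"] wp_lt[of j n] by auto
      then show "j \<in> ws n ` {..<n}" using wp_lt[of j n] j by auto
    qed
  qed
qed

lemma wp_bij: "n \<ge> 2 \<Longrightarrow> bij_betw (wp n) {..<n} {..<n}"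
proof (rule bij_betw_imageI)
  show "inj_on (wp n) {..<n}" by (auto intro!: inj_onI simp: wp_inj)
  assume "n \<ge> 2"
  show "wp n ` {..<n} = {..<n}"
  proof
    show "wp n ` {..<n} \<subseteq> {..<n}" using wp_lt by auto
    show "{..<n} \<subseteq> wp n ` {..<n}"
    proof
      fix j assume j: "j \<in> {..<n}"
      then have "j = wp n (ws n j)" using ws_wp_iff[of "ws n j" n j] ws_lt[of j n] by auto
      then show "j \<in> wp n ` {..<n}" using ws_lt[of j n] j by auto
    qed
  qed
qed

lemma sumV_big: "sum h (wheel_V n) = (\<Sum>i<n. h i) + (h n::real)"
  unfolding wheel_V_def atLeast0AtMost lessThan_Suc_atMost[symmetric] by simp

lemma w_big: assumes k: "k \<ge> 1" and n: "n \<ge> 6"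
  shows "frac_tdim k (wheel_V n) (wheel_E n) = real n / 4"
proof (rule frac_tdim_eqI)
  have n3: "n \<ge> 3" "n \<ge> 2" using n by auto
  define h0 :: "nat \<Rightarrow> real" where "h0 = (\<lambda>z. if z < n then 1/4 else 0)"
  show "trunc_resolving_fn k (wheel_V n) (wheel_E n) h0"
    unfolding trunc_resolving_fn_def
  proof (intro conjI ballI impI)
    fix x y assume xy: "x \<in> wheel_V n" "y \<in> wheel_V n" "x \<noteq> y"
    have "wgood n x y" using wgood_all[OF n] xy unfolding wheel_V_def by auto
    then obtain a b c d where abcd: "distinct [a,b,c,d]" "a < n" "b < n" "c < n" "d < n"
      "wD n x a \<noteq> wD n y a" "wD n x b \<noteq> wD n y b" "wD n x c \<noteq> wD n y c" "wD n x d \<noteq> wD n y d"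
      unfolding wgood_def by blast
    have sub: "{a,b,c,d} \<subseteq> Rk k (wheel_V n) (wheel_E n) x y"
      unfolding w_Rk[OF k n3(1) xy(1,2)] using abcd unfolding wheel_V_def by auto
    have "sum h0 {a,b,c,d} \<le> sum h0 (Rk k (wheel_V n) (wheel_E n) x y)"
      using sub fin_Rk by (intro sum_mono2) (auto simp: h0_def)
    moreover have "sum h0 {a,b,c,d} = 1" using abcd by (simp add: h0_def)
    ultimately show "1 \<le> sum h0 (Rk k (wheel_V n) (wheel_E n) x y)" by simp
  qed (auto simp: h0_def)
  show "sum h0 (wheel_V n) = real n / 4" unfolding sumV_big h0_def by simp
  fix h assume h: "trunc_resolving_fn k (wheel_V n) (wheel_E n) h"
  have nn: "\<And>z. z \<le> n \<Longrightarrow> 0 \<le> h z" using w_res_nn[OF h] unfolding wheel_V_def by auto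
  have each: "1 \<le> h (wp n i) + h i + h (ws n i) + h (ws n (ws n i))" if i: "i < n" for i
  proof -
    have iV: "i \<in> wheel_V n" "ws n i \<in> wheel_V n" using i ws_lt[OF i] unfolding wheel_V_def by auto
    have ne: "i \<noteq> ws n i" using ws_ne[OF n3(2) i] by simp
    have wpws: "wp n (ws n i) = i" using ws_wp_iff[OF ws_lt[OF i] i] by simp
    have sub: "Rk k (wheel_V n) (wheel_E n) i (ws n i) \<subseteq> {wp n i, i, ws n i, ws n (ws n i)}"
    proof
      fix z assume "z \<in> Rk k (wheel_V n) (wheel_E n) i (ws n i)"
      then have z: "z \<le> n" "wD n i z \<noteq> wD n (ws n i) z"
        unfolding w_Rk[OF k n3(1) iV] by (auto simp: wheel_V_def)
      show "z \<in> {wp n i, i, ws n i, ws n (ws n i)}"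
        using z i ws_lt[OF i] wpws unfolding wD_def by (auto split: if_splits)
    qed
    have "1 \<le> sum h (Rk k (wheel_V n) (wheel_E n) i (ws n i))" using w_res_c[OF h iV ne] .
    also have "\<dots> \<le> sum h {wp n i, i, ws n i, ws n (ws n i)}"
      using sub nn i wp_lt[OF i] ws_lt[OF i] ws_lt[OF ws_lt[OF i]] by (intro sum_mono2) auto
    also have "\<dots> \<le> h (wp n i) + h i + h (ws n i) + h (ws n (ws n i))"
      using nn i wp_lt[OF i] ws_lt[OF i] ws_lt[OF ws_lt[OF i]] by (intro sum4_le) auto
    finally show ?thesis .
  qed
  have "(\<Sum>i<n. (1::real)) \<le> (\<Sum>i<n. h (wp n i) + h i + h (ws n i) + h (ws n (ws n i)))"
    using each by (intro sum_mono) auto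
  also have "\<dots> = (\<Sum>i<n. h (wp n i)) + (\<Sum>i<n. h i) + (\<Sum>i<n. h (ws n i)) + (\<Sum>i<n. h (ws n (ws n i)))"
    by (simp add: sum.distrib)
  also have "(\<Sum>i<n. h (wp n i)) = (\<Sum>i<n. h i)" using sum.reindex_bij_betw[OF wp_bij[OF n3(2)], of h] .
  also have "(\<Sum>i<n. h (ws n i)) = (\<Sum>i<n. h i)" using sum.reindex_bij_betw[OF ws_bij[OF n3(2)], of h] .
  also have "(\<Sum>i<n. h (ws n (ws n i))) = (\<Sum>i<n. h i)"
    using sum.reindex_bij_betw[OF ws_bij[OF n3(2)], of "\<lambda>j. h (ws n j)"]
      sum.reindex_bij_betw[OF ws_bij[OF n3(2)], of h] by simp
  finally have "real n \<le> 4 * (\<Sum>i<n. h i)" by simp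
  moreover have "0 \<le> h n" using nn by simp
  ultimately show "real n / 4 \<le> sum h (wheel_V n)" unfolding sumV_big by simp
qed


theorem corollary3p2:
  fixes k :: nat
  assumes "k \<ge> 1"
  shows "frac_tdim k petersen_V petersen_E = 5 / 3
    \<and> (\<forall>n::nat. n \<ge> 3 \<longrightarrow>
          frac_tdim k (wheel_V n) (wheel_E n) =
            (if n \<in> {3, 4} then 2 else if n = 5 then 3 / 2 else real n / 4))
    \<and> (\<forall>(m::nat) (a::nat \<Rightarrow> nat). m \<ge> 2 \<longrightarrow> (\<forall>i<m. a i \<ge> 1) \<longrightarrow>
          (let n = (\<Sum>i<m. a i); s = card {i. i < m \<and> a i = 1} in
           frac_tdim k (cmp_V m a) (cmp_E m a) =
             (if s = 1 then (real n - 1) / 2 else real n / 2)))"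
proof (intro conjI allI impI)
  show "frac_tdim k petersen_V petersen_E = 5 / 3" by (rule p_main[OF assms])
next
  fix n :: nat assume n: "n \<ge> 3"
  consider "n = 3" | "n = 4" | "n = 5" | "n \<ge> 6" using n by linarith
  then show "frac_tdim k (wheel_V n) (wheel_E n) =
            (if n \<in> {3, 4} then 2 else if n = 5 then 3 / 2 else real n / 4)"
  proof cases
    case 1 then show ?thesis using w3[OF assms] by simp
  next
    case 2 then show ?thesis using w4[OF assms] by simp
  next
    case 3 then show ?thesis using w5[OF assms] by simp
  next
    case 4 then show ?thesis using w_big[OF assms 4] by simp
  qed
next
  fix m :: nat and a :: "nat \<Rightarrow> nat"
  assume "m \<ge> 2" "\<forall>i<m. a i \<ge> 1"
  then show "let n = (\<Sum>i<m. a i); s = card {i. i < m \<and> a i = 1} in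
           frac_tdim k (cmp_V m a) (cmp_E m a) =
             (if s = 1 then (real n - 1) / 2 else real n / 2)"
    unfolding Let_def using cmp_main[OF assms] by simp
qed

end
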